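(* Let $\mathbb K$ be algebraically closed of characteristic $0$, $f(y)=\prod_{i=1}^{\gamma}(y-\alpha_i)^{\beta_i}$ with pairwise distinct $\alpha_i\in\mathbb K^*$ and $\beta_i\ge1$, and $U_f=\operatorname{Spec}\mathbb K[x_1,x_2,y^{\pm1}]/(x_1x_2-f(y))$. Then the closed irreducible curves in $U_f$ isomorphic to $\mathbb A^1$ are exactly the $2\gamma$ curves $\{x_2=0,\ y=\alpha_i\}$ and $\{x_1=0,\ y=\alpha_i\}$, $i=1,\dots,\gamma$. *)

theory Defs
  imports "HOL-Computational_Algebra.Polynomial"
begin

text \<open>Polynomials in three variables x1, x2, y are represented as nested univariate
  polynomials 'a poly poly poly (innermost variable x1, then x2, outermost y).\<close>

definition eval3 :: "'a::comm_ring_1 poly poly poly \<Rightarrow> 'a \<times> 'a \<times> 'a \<Rightarrow> 'a" where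
  "eval3 P u = (case u of (x1, x2, y) \<Rightarrow>
      poly (map_poly (\<lambda>Q. poly (map_poly (\<lambda>R. poly R x1) Q) x2) P) y)"

definition U_f :: "'a::field poly \<Rightarrow> ('a \<times> 'a \<times> 'a) set" where
  "U_f f = {(x1, x2, y). y \<noteq> 0 \<and> x1 * x2 = poly f y}"

text \<open>Zariski closed subsets of U (U a subset of K^3 with y invertible):
  common zero loci in U of families of polynomials.  (Laurent polynomials in y
  give the same closed sets, since y is a unit on U.)\<close>
definition zariski_closed_in :: "('a::field \<times> 'a \<times> 'a) set \<Rightarrow> ('a \<times> 'a \<times> 'a) set \<Rightarrow> bool" where
  "zariski_closed_in U C \<longleftrightarrow> C \<subseteq> U \<and> (\<exists>S. C = {u \<in> U. \<forall>P\<in>S. eval3 P u = 0})"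

text \<open>Regular functions on U: restrictions of elements of K[x1,x2,y^{+-1}],
  i.e. of the form P(x1,x2,y) / y^k.\<close>
definition regular_on :: "('a::field \<times> 'a \<times> 'a) set \<Rightarrow> ('a \<times> 'a \<times> 'a \<Rightarrow> 'a) \<Rightarrow> bool" where
  "regular_on U g \<longleftrightarrow> (\<exists>P k. \<forall>u\<in>U. g u = eval3 P u / (snd (snd u)) ^ k)"

definition morphism_A1_to :: "('a::field \<times> 'a \<times> 'a) set \<Rightarrow> ('a \<Rightarrow> 'a \<times> 'a \<times> 'a) \<Rightarrow> bool" where
  "morphism_A1_to U \<phi> \<longleftrightarrow>
     (\<exists>p1 p2 p3. \<phi> = (\<lambda>t. (poly p1 t, poly p2 t, poly p3 t))) \<and> (\<forall>t. \<phi> t \<in> U)"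

text \<open>A closed subvariety C of the affine variety U (reduced structure) is isomorphic to A^1:
  there is a morphism A^1 \<rightarrow> U with image C, and an inverse morphism C \<rightarrow> A^1, i.e. a regular
  function on C, which (C being closed in the affine U) is the restriction of a regular function on U.\<close>
definition iso_to_A1 :: "('a::field \<times> 'a \<times> 'a) set \<Rightarrow> ('a \<times> 'a \<times> 'a) set \<Rightarrow> bool" where
  "iso_to_A1 U C \<longleftrightarrow>
     (\<exists>\<phi> \<psi>. morphism_A1_to U \<phi> \<and> range \<phi> = C \<and> regular_on U \<psi> \<and> (\<forall>t. \<psi> (\<phi> t) = t))"

end

theory Submission
  imports Defs
begin

lemma nonvanish_const:
  fixes p :: "'a::alg_closed_field poly"
  assumes "\<And>t. poly p t \<noteq> 0" shows "p = [:coeff p 0:]"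
proof -
  have "degree p = 0" using alg_closed_imp_poly_has_root[of p] assms by auto
  thus ?thesis by (intro degree_0_id[symmetric]) simp
qed

lemma poly_surj:
  fixes p :: "'a::alg_closed_field poly"
  assumes "degree p > 0" shows "\<exists>t. poly p t = x"
proof -
  have "degree (p + [:-x:]) = degree p" using assms by (simp add: degree_add_eq_left)
  then obtain t where "poly (p + [:-x:]) t = 0" using alg_closed_imp_poly_has_root assms by metis
  thus ?thesis by (auto simp: algebra_simps)
qed

lemma prod_const:
  fixes p1 p2 :: "'a::{field_char_0} poly"
  assumes "\<And>t. poly p1 t * poly p2 t = c" shows "p1 * p2 = [:c:]"
  using assms by (subst poly_eq_poly_eq_iff[symmetric]) auto

lemma pconst: "p = [:c:] \<Longrightarrow> poly p x = poly p y" by simp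

lemma iso_line:
  fixes f :: "'a::{alg_closed_field, field_char_0} poly"
  assumes "iso_to_A1 (U_f f) C"
  shows "\<exists>c. poly f c = 0 \<and> c \<noteq> 0 \<and> (C = {(x1,x2,y). x2=0 \<and> y=c} \<or> C = {(x1,x2,y). x1=0 \<and> y=c})"
proof -
  obtain \<phi> \<psi> where m: "morphism_A1_to (U_f f) \<phi>" and r: "range \<phi> = C" and inv: "\<And>t. \<psi> (\<phi> t) = t"
    using assms unfolding iso_to_A1_def by blast
  obtain p1 p2 p3 where phi: "\<phi> = (\<lambda>t. (poly p1 t, poly p2 t, poly p3 t))" and inU: "\<And>t. \<phi> t \<in> U_f f"
    using m unfolding morphism_A1_to_def by blast
  have nc: "\<phi> 0 \<noteq> \<phi> 1" using inv[of 0] inv[of 1] by force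
  have U: "poly p3 t \<noteq> 0" "poly p1 t * poly p2 t = poly f (poly p3 t)" for t
    using inU[of t] unfolding phi U_f_def by auto
  define c where "c = coeff p3 0"
  have p3: "p3 = [:c:]" unfolding c_def using nonvanish_const U(1) by blast
  have c0: "c \<noteq> 0" using U(1)[of 0] p3 by simp
  have pp: "p1 * p2 = [:poly f c:]" using prod_const[of p1 p2 "poly f c"] U(2) p3 by simp
  have fc: "poly f c = 0"
  proof (rule ccontr)
    assume "poly f c \<noteq> 0"
    hence "p1 \<noteq> 0" "p2 \<noteq> 0" using pp by auto
    hence "degree (p1 * p2) = degree p1 + degree p2" by (rule degree_mult_eq)
    hence "degree p1 + degree p2 = 0" using pp by simp
    hence "degree p1 = 0" "degree p2 = 0" by auto
    hence e: "p1 = [:coeff p1 0:]" "p2 = [:coeff p2 0:]" by (simp_all add: degree_0_id)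
    have "poly p1 0 = poly p1 1" "poly p2 0 = poly p2 1" using pconst[OF e(1)] pconst[OF e(2)] by blast+
    hence "\<phi> 0 = \<phi> 1" unfolding phi p3 by simp
    thus False using nc by simp
  qed
  have "p1 = 0 \<or> p2 = 0" using pp fc by simp
  thus ?thesis
  proof
    assume z: "p1 = 0"
    have "degree p2 > 0"
    proof (rule ccontr)
      assume "\<not> degree p2 > 0"
      hence "p2 = [:coeff p2 0:]" by (intro degree_0_id[symmetric]) simp
      hence "poly p2 0 = poly p2 1" by (rule pconst)
      hence "\<phi> 0 = \<phi> 1" unfolding phi p3 z by simp
      thus False using nc by simp
    qed
    hence s: "\<exists>t. poly p2 t = x" for x using poly_surj by blast
    have "range (\<lambda>t. (poly p1 t, poly p2 t, poly p3 t)) = {(x1,x2,y). x1=0 \<and> y=c}"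
    proof (intro equalityI subsetI)
      fix u :: "'a \<times> 'a \<times> 'a" assume "u \<in> range (\<lambda>t. (poly p1 t, poly p2 t, poly p3 t))"
      thus "u \<in> {(x1,x2,y). x1=0 \<and> y=c}" unfolding p3 z by auto
    next
      fix u :: "'a \<times> 'a \<times> 'a" assume "u \<in> {(x1,x2,y). x1=0 \<and> y=c}"
      then obtain x where u: "u = (0, x, c)" by auto
      obtain t where "poly p2 t = x" using s by blast
      thus "u \<in> range (\<lambda>t. (poly p1 t, poly p2 t, poly p3 t))"
        unfolding u p3 z by (intro rev_image_eqI[of t]) auto
    qed
    hence "C = {(x1,x2,y). x1=0 \<and> y=c}" using r phi by simp
    thus ?thesis using fc c0 by blast
  next
    assume z: "p2 = 0"
    have "degree p1 > 0"
    proof (rule ccontr)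
      assume "\<not> degree p1 > 0"
      hence "p1 = [:coeff p1 0:]" by (intro degree_0_id[symmetric]) simp
      hence "poly p1 0 = poly p1 1" by (rule pconst)
      hence "\<phi> 0 = \<phi> 1" unfolding phi p3 z by simp
      thus False using nc by simp
    qed
    hence s: "\<exists>t. poly p1 t = x" for x using poly_surj by blast
    have "range (\<lambda>t. (poly p1 t, poly p2 t, poly p3 t)) = {(x1,x2,y). x2=0 \<and> y=c}"
    proof (intro equalityI subsetI)
      fix u :: "'a \<times> 'a \<times> 'a" assume "u \<in> range (\<lambda>t. (poly p1 t, poly p2 t, poly p3 t))"
      thus "u \<in> {(x1,x2,y). x2=0 \<and> y=c}" unfolding p3 z by auto
    next
      fix u :: "'a \<times> 'a \<times> 'a" assume "u \<in> {(x1,x2,y). x2=0 \<and> y=c}"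
      then obtain x where u: "u = (x, 0, c)" by auto
      obtain t where "poly p1 t = x" using s by blast
      thus "u \<in> range (\<lambda>t. (poly p1 t, poly p2 t, poly p3 t))"
        unfolding u p3 z by (intro rev_image_eqI[of t]) auto
    qed
    hence "C = {(x1,x2,y). x2=0 \<and> y=c}" using r phi by simp
    thus ?thesis using fc c0 by blast
  qed
qed

lemma eval3_x1: "eval3 [:[:[:0,1:]:]:] (a,b,c) = a"
  by (simp add: eval3_def map_poly_pCons)
lemma eval3_x2: "eval3 [:[:0,1:]:] (a,b,c) = b"
  by (simp add: eval3_def map_poly_pCons)
lemma eval3_y: "eval3 [:[:[:-d:]:],1:] (a,b,c) = c - d"
  by (simp add: eval3_def map_poly_pCons)


lemma polyf_zero:
  fixes \<alpha> :: "nat \<Rightarrow> 'a::field"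
  assumes "\<And>i. i < \<gamma> \<Longrightarrow> \<beta> i \<ge> 1"
  shows "poly (\<Prod>i<\<gamma>. [:- \<alpha> i, 1:] ^ \<beta> i) c = 0 \<longleftrightarrow> (\<exists>i<\<gamma>. c = \<alpha> i)"
  using assms by (auto simp: poly_prod) (metis Suc_le_eq lessThan_iff)

lemma line1_closed:
  fixes a :: "'a::field"
  assumes "poly f a = 0" "a \<noteq> 0"
  shows "zariski_closed_in (U_f f) {(x1, x2, y). x2 = 0 \<and> y = a}"
  unfolding zariski_closed_in_def
proof
  show "{(x1, x2, y). x2 = 0 \<and> y = a} \<subseteq> U_f f" using assms by (auto simp: U_f_def)
  show "\<exists>S. {(x1, x2, y). x2 = 0 \<and> y = a} = {u \<in> U_f f. \<forall>P\<in>S. eval3 P u = 0}"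
    by (rule exI[of _ "{[:[:0,1:]:], [:[:[:-a:]:],1:]}"])
       (use assms in \<open>auto simp: U_f_def eval3_x2 eval3_y\<close>)
qed

lemma line2_closed:
  fixes a :: "'a::field"
  assumes "poly f a = 0" "a \<noteq> 0"
  shows "zariski_closed_in (U_f f) {(x1, x2, y). x1 = 0 \<and> y = a}"
  unfolding zariski_closed_in_def
proof
  show "{(x1, x2, y). x1 = 0 \<and> y = a} \<subseteq> U_f f" using assms by (auto simp: U_f_def)
  show "\<exists>S. {(x1, x2, y). x1 = 0 \<and> y = a} = {u \<in> U_f f. \<forall>P\<in>S. eval3 P u = 0}"
    by (rule exI[of _ "{[:[:[:0,1:]:]:], [:[:[:-a:]:],1:]}"])
       (use assms in \<open>auto simp: U_f_def eval3_x1 eval3_y\<close>)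
qed

lemma line1_iso:
  fixes a :: "'a::field"
  assumes "poly f a = 0" "a \<noteq> 0"
  shows "iso_to_A1 (U_f f) {(x1, x2, y). x2 = 0 \<and> y = a}"
  unfolding iso_to_A1_def
proof (intro exI conjI)
  show "morphism_A1_to (U_f f) (\<lambda>t. (t, 0, a))"
    unfolding morphism_A1_to_def
  proof
    show "\<exists>p1 p2 p3. (\<lambda>t. (t, 0, a)) = (\<lambda>t. (poly p1 t, poly p2 t, poly p3 t))"
      by (rule exI[of _ "[:0,1:]"], rule exI[of _ 0], rule exI[of _ "[:a:]"]) simp
  qed (use assms in \<open>auto simp: U_f_def\<close>)
  show "range (\<lambda>t. (t, 0, a)) = {(x1, x2, y). x2 = 0 \<and> y = a}" by auto
  show "regular_on (U_f f) fst" unfolding regular_on_def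
    by (rule exI[of _ "[:[:[:0,1:]:]:]"], rule exI[of _ 0]) (auto simp: eval3_x1)
qed simp

lemma line2_iso:
  fixes a :: "'a::field"
  assumes "poly f a = 0" "a \<noteq> 0"
  shows "iso_to_A1 (U_f f) {(x1, x2, y). x1 = 0 \<and> y = a}"
  unfolding iso_to_A1_def
proof (intro exI conjI)
  show "morphism_A1_to (U_f f) (\<lambda>t. (0, t, a))"
    unfolding morphism_A1_to_def
  proof
    show "\<exists>p1 p2 p3. (\<lambda>t. (0, t, a)) = (\<lambda>t. (poly p1 t, poly p2 t, poly p3 t))"
      by (rule exI[of _ 0], rule exI[of _ "[:0,1:]"], rule exI[of _ "[:a:]"]) simp
  qed (use assms in \<open>auto simp: U_f_def\<close>)
  show "range (\<lambda>t. (0, t, a)) = {(x1, x2, y). x1 = 0 \<and> y = a}" by auto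
  show "regular_on (U_f f) (\<lambda>u. fst (snd u))" unfolding regular_on_def
    by (rule exI[of _ "[:[:0,1:]:]"], rule exI[of _ 0]) (auto simp: eval3_x2)
qed simp

theorem lemma5p4:
  fixes \<alpha> :: "nat \<Rightarrow> 'a::{alg_closed_field, field_char_0}"
    and \<beta> :: "nat \<Rightarrow> nat" and \<gamma> :: nat
  assumes "inj_on \<alpha> {..<\<gamma>}"
    and "\<And>i. i < \<gamma> \<Longrightarrow> \<alpha> i \<noteq> 0"
    and "\<And>i. i < \<gamma> \<Longrightarrow> \<beta> i \<ge> 1"
  defines "f \<equiv> (\<Prod>i<\<gamma>. [:- \<alpha> i, 1:] ^ \<beta> i)"
  shows "{C. zariski_closed_in (U_f f) C \<and> iso_to_A1 (U_f f) C}
           = (\<Union>i<\<gamma>. {{(x1, x2, y). x2 = 0 \<and> y = \<alpha> i}, {(x1, x2, y). x1 = 0 \<and> y = \<alpha> i}})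
       \<and> card {C. zariski_closed_in (U_f f) C \<and> iso_to_A1 (U_f f) C} = 2 * \<gamma>"
proof -
  have pf: "poly f c = 0 \<longleftrightarrow> (\<exists>i<\<gamma>. c = \<alpha> i)" for c
    unfolding f_def by (rule polyf_zero[OF assms(3)])
  define g :: "nat \<times> bool \<Rightarrow> ('a \<times> 'a \<times> 'a) set"
    where "g = (\<lambda>(i, b). if b then {(x1, x2, y). x2 = 0 \<and> y = \<alpha> i}
                                        else {(x1, x2, y). x1 = 0 \<and> y = \<alpha> i})"
  have eq: "{C. zariski_closed_in (U_f f) C \<and> iso_to_A1 (U_f f) C}
           = (\<Union>i<\<gamma>. {{(x1, x2, y). x2 = 0 \<and> y = \<alpha> i}, {(x1, x2, y). x1 = 0 \<and> y = \<alpha> i}})"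
  proof (intro equalityI subsetI)
    fix C :: "('a \<times> 'a \<times> 'a) set" assume "C \<in> {C. zariski_closed_in (U_f f) C \<and> iso_to_A1 (U_f f) C}"
    then obtain c where "poly f c = 0" "C = {(x1,x2,y). x2=0 \<and> y=c} \<or> C = {(x1,x2,y). x1=0 \<and> y=c}"
      using iso_line by blast
    then show "C \<in> (\<Union>i<\<gamma>. {{(x1, x2, y). x2 = 0 \<and> y = \<alpha> i}, {(x1, x2, y). x1 = 0 \<and> y = \<alpha> i}})"
      using pf by auto
  next
    fix C :: "('a \<times> 'a \<times> 'a) set" assume "C \<in> (\<Union>i<\<gamma>. {{(x1, x2, y). x2 = 0 \<and> y = \<alpha> i}, {(x1, x2, y). x1 = 0 \<and> y = \<alpha> i}})"
    then obtain i where i: "i < \<gamma>" "C = {(x1, x2, y). x2 = 0 \<and> y = \<alpha> i} \<or> C = {(x1, x2, y). x1 = 0 \<and> y = \<alpha> i}"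
      by blast
    have "poly f (\<alpha> i) = 0" "\<alpha> i \<noteq> 0" using pf i assms(2) by auto
    then show "C \<in> {C. zariski_closed_in (U_f f) C \<and> iso_to_A1 (U_f f) C}"
      using i(2) line1_closed line2_closed line1_iso line2_iso by blast
  qed
  have img: "(\<Union>i<\<gamma>. {{(x1, x2, y). x2 = 0 \<and> y = \<alpha> i}, {(x1, x2, y). x1 = 0 \<and> y = \<alpha> i}})
      = g ` ({..<\<gamma>} \<times> UNIV)"
  proof (intro equalityI subsetI)
    fix C :: "('a \<times> 'a \<times> 'a) set" assume "C \<in> (\<Union>i<\<gamma>. {{(x1, x2, y). x2 = 0 \<and> y = \<alpha> i}, {(x1, x2, y). x1 = (0::'a) \<and> y = \<alpha> i}})"
    then obtain i where i: "i < \<gamma>" "C = g (i, True) \<or> C = g (i, False)" unfolding g_def by auto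
    then show "C \<in> g ` ({..<\<gamma>} \<times> UNIV)" by (metis SigmaI UNIV_I lessThan_iff rev_image_eqI)
  next
    fix C :: "('a \<times> 'a \<times> 'a) set" assume "C \<in> g ` ({..<\<gamma>} \<times> UNIV)"
    then obtain i b where "i < \<gamma>" "C = g (i, b)" by auto
    then show "C \<in> (\<Union>i<\<gamma>. {{(x1, x2, y). x2 = 0 \<and> y = \<alpha> i}, {(x1, x2, y). x1 = (0::'a) \<and> y = \<alpha> i}})"
      unfolding g_def by (cases b) auto
  qed
  have inj0: "i = j \<and> b = b'" if ij: "i \<in> {..<\<gamma>}" "j \<in> {..<\<gamma>}" and e: "g (i, b) = g (j, b')"
    for i j b b'
  proof -
    have "(if b then (1::'a, 0::'a, \<alpha> i) else (0, 1, \<alpha> i)) \<in> g (i, b)" unfolding g_def by auto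
    hence m: "(if b then (1::'a, 0::'a, \<alpha> i) else (0, 1, \<alpha> i)) \<in> g (j, b')" using e by simp
    hence "\<alpha> i = \<alpha> j" unfolding g_def by (auto split: if_splits)
    hence "i = j" using assms(1) ij by (auto dest: inj_onD)
    moreover have "b = b'" using m unfolding g_def by (auto split: if_splits)
    ultimately show "i = j \<and> b = b'" by simp
  qed
  have inj: "inj_on g ({..<\<gamma>} \<times> UNIV)"
  proof (rule inj_onI)
    fix x y :: "nat \<times> bool" assume x: "x \<in> {..<\<gamma>} \<times> UNIV" and y: "y \<in> {..<\<gamma>} \<times> UNIV" and e: "g x = g y"
    obtain i b where xi: "x = (i, b)" by (cases x)
    obtain j b' where yj: "y = (j, b')" by (cases y)
    have "i \<in> {..<\<gamma>}" "j \<in> {..<\<gamma>}" "g (i, b) = g (j, b')" using x y e unfolding xi yj by auto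
    hence "i = j \<and> b = b'" by (rule inj0)
    thus "x = y" unfolding xi yj by simp
  qed
  have "card (g ` ({..<\<gamma>} \<times> UNIV)) = 2 * \<gamma>"
    using card_image[OF inj] by (simp add: card_cartesian_product)
  thus ?thesis using eq img by simp
qed

end
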